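(* Let $p_1,\dots,p_n\in S^1$ and let $a_1,\dots,a_n$ be nonnegative integers with $a_1+\cdots+a_n$ even. Then the ideal $\mathfrak m_{p_1}^{a_1}\mathfrak m_{p_2}^{a_2}\cdots\mathfrak m_{p_n}^{a_n}$ of $C_{an}(S^1;\mathbf{R})$ is principal.
   Context: $S^1$ is identified with $\mathbf{R}/2\pi\mathbf{Z}$. $C_{an}(S^1;\mathbf{R})$ is the ring (under pointwise operations) of real-valued real-analytic functions on $S^1$, i.e. $2\pi$-periodic real-analytic functions $\mathbf{R}\to\mathbf{R}$. For $p\in S^1$, $\mathfrak m_p=\{f\in C_{an}(S^1;\mathbf{R}): f(p)=0\}$. *)

theory Defs
  imports "HOL-Analysis.Analysis" "HOL-Algebra.Ideal_Product"
begin

definition real_analytic_at :: "(real \<Rightarrow> real) \<Rightarrow> real \<Rightarrow> bool" where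
  "real_analytic_at f x \<longleftrightarrow>
     (\<exists>r>0. \<exists>c :: nat \<Rightarrow> real. \<forall>y. \<bar>y - x\<bar> < r \<longrightarrow> (\<lambda>k. c k * (y - x) ^ k) sums f y)"

text \<open>The ring C_an(S^1;R) of 2pi-periodic real-analytic functions R -> R, pointwise operations.\<close>
definition Can :: "(real \<Rightarrow> real) ring" where
  "Can = \<lparr> carrier = {f. (\<forall>x. f (x + 2 * pi) = f x) \<and> (\<forall>x. real_analytic_at f x)},
           mult = (\<lambda>f g x. f x * g x),
           one = (\<lambda>x. 1),
           zero = (\<lambda>x. 0),
           add = (\<lambda>f g x. f x + g x) \<rparr>"

text \<open>The maximal ideal of functions vanishing at p (p a real representative of a point of S^1).\<close>
definition mideal :: "real \<Rightarrow> (real \<Rightarrow> real) set" where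
  "mideal p = {f \<in> carrier Can. f p = 0}"

definition ideal_power :: "(real \<Rightarrow> real) set \<Rightarrow> nat \<Rightarrow> (real \<Rightarrow> real) set" where
  "ideal_power I k = I [^]\<^bsub>ideals_set Can\<^esub> k"

fun prod_mideals :: "(nat \<Rightarrow> real) \<Rightarrow> (nat \<Rightarrow> nat) \<Rightarrow> nat \<Rightarrow> (real \<Rightarrow> real) set" where
  "prod_mideals p a 0 = carrier Can"
| "prod_mideals p a (Suc n) = ideal_prod Can (prod_mideals p a n) (ideal_power (mideal (p n)) (a n))"

end

theory Submission
  imports Defs "HOL-Complex_Analysis.Complex_Analysis"
begin

definition hol_at :: "(real \<Rightarrow> real) \<Rightarrow> real \<Rightarrow> bool" where
  "hol_at f x \<longleftrightarrow> (\<exists>F r. r > 0 \<and> F holomorphic_on ball (complex_of_real x) r \<and>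
      (\<forall>y. \<bar>y - x\<bar> < r \<longrightarrow> F (of_real y) = of_real (f y)))"

lemma of_real_in_ball: "complex_of_real y \<in> ball (complex_of_real x) r \<longleftrightarrow> \<bar>y - x\<bar> < r"
  by (simp add: dist_real_def abs_minus_commute)

lemma analytic_imp_hol:
  assumes "real_analytic_at f x" shows "hol_at f x"
proof -
  obtain r c where r: "r > 0" and s: "\<And>y. \<bar>y - x\<bar> < r \<Longrightarrow> (\<lambda>k. c k * (y - x) ^ k) sums f y"
    using assms unfolding real_analytic_at_def by blast
  define F where "F w = (\<Sum>k. complex_of_real (c k) * (w - of_real x) ^ k)" for w
  have sm: "(\<lambda>k. complex_of_real (c k) * (w - of_real x) ^ k) sums F w" if w: "w \<in> ball (of_real x) r" for w
  proof -
    define \<rho> where "\<rho> = (cmod (w - of_real x) + r) / 2"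
    have "dist (of_real x) w < r" using w by simp
    then have d: "cmod (w - of_real x) < r" by (simp add: dist_norm norm_minus_commute)
    then have lt: "\<rho> < r" "cmod (w - of_real x) < \<rho>" unfolding \<rho>_def by auto
    have "\<rho> \<ge> 0" unfolding \<rho>_def using r by simp
    then have "\<bar>(x + \<rho>) - x\<bar> < r" using lt by simp
    from s[OF this] have "summable (\<lambda>k. c k * \<rho> ^ k)" by (simp add: sums_summable)
    then have "summable (\<lambda>k. complex_of_real (c k * \<rho> ^ k))"
      by (simp only: summable_complex_of_real)
    then have "summable (\<lambda>k. complex_of_real (c k) * (complex_of_real \<rho>) ^ k)"
      by (simp only: of_real_mult of_real_power)
    then have "summable (\<lambda>k. norm (complex_of_real (c k) * (w - of_real x) ^ k))"
      by (rule powser_insidea) (use lt in auto)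
    then show ?thesis unfolding F_def by (rule summable_sums[OF summable_norm_cancel])
  qed
  have "F holomorphic_on ball (of_real x) r"
    by (rule power_series_holomorphic[where a="\<lambda>k. of_real (c k)"]) (use sm in auto)
  moreover have "\<forall>y. \<bar>y - x\<bar> < r \<longrightarrow> F (of_real y) = of_real (f y)"
  proof (intro allI impI)
    fix y assume y: "\<bar>y - x\<bar> < r"
    show "F (of_real y) = of_real (f y)"
  proof -
    have "of_real y \<in> ball (complex_of_real x) r" using y of_real_in_ball by blast
    from sm[OF this] have "(\<lambda>k. complex_of_real (c k * (y - x) ^ k)) sums F (of_real y)" by simp
    moreover have "(\<lambda>k. complex_of_real (c k * (y - x) ^ k)) sums of_real (f y)"
      by (subst sums_of_real_iff) (rule s[OF y])
    ultimately show ?thesis by (rule sums_unique2)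
  qed
  qed
  ultimately show ?thesis unfolding hol_at_def using r by (intro exI[of _ F] exI[of _ r]) simp
qed

lemma hol_imp_analytic:
  assumes "hol_at f x" shows "real_analytic_at f x"
proof -
  obtain F r where r: "r > 0" and h: "F holomorphic_on ball (complex_of_real x) r"
    and e: "\<And>y. \<bar>y - x\<bar> < r \<Longrightarrow> F (of_real y) = of_real (f y)"
    using assms unfolding hol_at_def by blast
  define d where "d n = (deriv ^^ n) F (of_real x) / fact n" for n
  have key: "(\<lambda>n. Re (d n) * (y - x) ^ n) sums f y" if y: "\<bar>y - x\<bar> < r" for y
  proof -
    have "of_real y \<in> ball (complex_of_real x) r" using y of_real_in_ball by blast
    from holomorphic_power_series[OF h this]
    have "(\<lambda>n. d n * (of_real y - of_real x) ^ n) sums F (of_real y)" by (simp add: d_def)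
    then have S: "(\<lambda>n. d n * of_real ((y - x) ^ n)) sums of_real (f y)" by (simp add: e[OF y])
    have "(\<lambda>n. Re (d n * of_real ((y - x) ^ n))) sums Re (of_real (f y))"
      by (rule conjunct1[OF sums_complex_iff[THEN iffD1, OF S]])
    then show ?thesis by simp
  qed
  show ?thesis unfolding real_analytic_at_def
    by (rule exI[of _ r], rule conjI[OF r], rule exI[of _ "\<lambda>n. Re (d n)"]) (use key in blast)
qed

lemma hol_iff: "real_analytic_at f x \<longleftrightarrow> hol_at f x"
  using analytic_imp_hol hol_imp_analytic by blast

lemma hol_const: "hol_at (\<lambda>y. c) x"
  unfolding hol_at_def by (rule exI[of _ "\<lambda>w. of_real c"], rule exI[of _ 1]) auto

lemma hol_add:
  assumes "hol_at f x" "hol_at g x" shows "hol_at (\<lambda>y. f y + g y) x"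
proof -
  obtain F r where r: "r > 0" and h: "F holomorphic_on ball (complex_of_real x) r"
    and e: "\<And>y. \<bar>y - x\<bar> < r \<Longrightarrow> F (of_real y) = of_real (f y)"
    using assms(1) unfolding hol_at_def by blast
  obtain G s where s: "s > 0" and hg: "G holomorphic_on ball (complex_of_real x) s"
    and eg: "\<And>y. \<bar>y - x\<bar> < s \<Longrightarrow> G (of_real y) = of_real (g y)"
    using assms(2) unfolding hol_at_def by blast
  have "(\<lambda>w. F w + G w) holomorphic_on ball (complex_of_real x) (min r s)"
    by (intro holomorphic_intros holomorphic_on_subset[OF h] holomorphic_on_subset[OF hg]) auto
  then show ?thesis unfolding hol_at_def using r s e eg
    by (intro exI[of _ "\<lambda>w. F w + G w"] exI[of _ "min r s"]) auto
qed

lemma hol_mult: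
  assumes "hol_at f x" "hol_at g x" shows "hol_at (\<lambda>y. f y * g y) x"
proof -
  obtain F r where r: "r > 0" and h: "F holomorphic_on ball (complex_of_real x) r"
    and e: "\<And>y. \<bar>y - x\<bar> < r \<Longrightarrow> F (of_real y) = of_real (f y)"
    using assms(1) unfolding hol_at_def by blast
  obtain G s where s: "s > 0" and hg: "G holomorphic_on ball (complex_of_real x) s"
    and eg: "\<And>y. \<bar>y - x\<bar> < s \<Longrightarrow> G (of_real y) = of_real (g y)"
    using assms(2) unfolding hol_at_def by blast
  have "(\<lambda>w. F w * G w) holomorphic_on ball (complex_of_real x) (min r s)"
    by (intro holomorphic_intros holomorphic_on_subset[OF h] holomorphic_on_subset[OF hg]) auto
  then show ?thesis unfolding hol_at_def using r s e eg
    by (intro exI[of _ "\<lambda>w. F w * G w"] exI[of _ "min r s"]) auto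
qed

lemma hol_minus:
  assumes "hol_at f x" shows "hol_at (\<lambda>y. - f y) x"
  using hol_mult[OF hol_const[of "-1"] assms] by simp

lemma hol_sin: "hol_at (\<lambda>y. sin ((y - q) / 2)) x"
  unfolding hol_at_def
  by (rule exI[of _ "\<lambda>w. sin ((w - of_real q) / 2)"], rule exI[of _ 1])
     (auto intro!: holomorphic_intros simp flip: sin_of_real)

lemma hol_cos: "hol_at (\<lambda>y. cos ((y - q) / 2)) x"
  unfolding hol_at_def
  by (rule exI[of _ "\<lambda>w. cos ((w - of_real q) / 2)"], rule exI[of _ 1])
     (auto intro!: holomorphic_intros simp flip: cos_of_real)

lemma hol_isCont:
  assumes "hol_at f x" shows "isCont f x"
proof -
  obtain F r where r: "r > 0" and h: "F holomorphic_on ball (complex_of_real x) r"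
    and e: "\<And>y. \<bar>y - x\<bar> < r \<Longrightarrow> F (of_real y) = of_real (f y)"
    using assms unfolding hol_at_def by blast
  have "isCont F (of_real x)"
    using holomorphic_on_imp_continuous_on[OF h] r
    by (simp add: continuous_on_eq_continuous_at)
  moreover have "isCont (\<lambda>y. complex_of_real y) x" by (intro continuous_intros)
  ultimately have "isCont (\<lambda>y. F (of_real y)) x"
    using isCont_o2 by blast
  then have c: "isCont (\<lambda>y. Re (F (of_real y))) x"
    by (rule continuous_Re)
  have e2: "\<forall>\<^sub>F y in nhds x. Re (F (of_real y)) = f y"
  proof -
    have "\<forall>\<^sub>F y in nhds x. y \<in> ball x r" by (rule eventually_nhds_in_open) (use r in auto)
    then show ?thesis
    proof (rule eventually_mono)
      fix y assume "y \<in> ball x r"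
      then have "\<bar>y - x\<bar> < r" by (simp add: dist_real_def abs_minus_commute)
      then show "Re (F (of_real y)) = f y" using e by simp
    qed
  qed
  show ?thesis by (rule iffD1[OF isCont_cong[OF e2] c])
qed


lemma per_nat:
  assumes "\<forall>x. g (x + 2*pi) = g (x::real)" shows "g (y + 2*pi* of_nat n) = g y"
proof (induction n)
  case 0 then show ?case by simp
next
  case (Suc n)
  have "g (y + 2*pi* of_nat (Suc n)) = g ((y + 2*pi* of_nat n) + 2*pi)" by (simp add: algebra_simps)
  also have "\<dots> = g (y + 2*pi* of_nat n)" using assms by blast
  finally show ?case using Suc by simp
qed

lemma per_int:
  assumes "\<forall>x. g (x + 2*pi) = g (x::real)" shows "g (y + 2*pi* of_int k) = g y"
proof (cases k rule: int_cases)
  case (nonneg n) then show ?thesis using per_nat[OF assms] by simp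
next
  case (neg n)
  have P: "g ((y - 2*pi* of_nat (Suc n)) + 2*pi* of_nat (Suc n)) = g (y - 2*pi* of_nat (Suc n))"
    by (rule per_nat[OF assms])
  have Q: "y + 2*pi * of_int k = y - 2*pi * of_nat (Suc n)" 
  proof -
    have "real_of_int k = - real (Suc n)" using neg by simp
    then have "y + 2*pi * of_int k = y + 2*pi * (- real (Suc n))" by (simp only:)
    then show ?thesis by (simp only: mult_minus_right)
  qed
  have "g (y + 2*pi* of_int k) = g (y - 2*pi* of_nat (Suc n))" by (simp only: Q)
  also have "\<dots> = g y" using P by simp
  finally show ?thesis .
qed

lemma sin_half_zero:
  assumes "sin ((y - q) / 2) = 0" shows "\<exists>k::int. y = q + 2*pi* of_int k"
proof -
  obtain i :: int where "(y - q) / 2 = of_int i * pi" using assms sin_zero_iff_int2 by blast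
  then have "y = q + 2*pi* of_int i" by (simp add: field_simps)
  then show ?thesis by blast
qed

lemma removable_value:
  fixes U :: "complex \<Rightarrow> complex"
  assumes h: "U holomorphic_on ball (of_real x0) r" and r: "r > 0"
    and e: "\<And>y. y \<noteq> x0 \<Longrightarrow> \<bar>y - x0\<bar> < r \<Longrightarrow> U (of_real y) = of_real (v y)"
  shows "U (of_real x0) = of_real (Lim (at x0) v)"
proof -
  have "isCont U (of_real x0)"
    using holomorphic_on_imp_continuous_on[OF h] r
    by (simp add: continuous_on_eq_continuous_at)
  moreover have "isCont (\<lambda>y. complex_of_real y) x0" by (intro continuous_intros)
  ultimately have "isCont (\<lambda>y. U (of_real y)) x0"
    using isCont_o2 by blast
  then have t: "((\<lambda>y. U (of_real y)) \<longlongrightarrow> U (of_real x0)) (at x0)"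
    by (simp add: isCont_def)
  have ev: "\<forall>\<^sub>F y in at x0. U (of_real y) = of_real (v y)"
    unfolding eventually_at
  proof (rule exI[of _ r], intro conjI r ballI impI)
    fix y :: real assume "y \<in> UNIV" "y \<noteq> x0 \<and> dist y x0 < r"
    then show "U (of_real y) = of_real (v y)" using e by (simp add: dist_real_def)
  qed
  have t2: "((\<lambda>y. complex_of_real (v y)) \<longlongrightarrow> U (of_real x0)) (at x0)"
    using tendsto_cong[OF ev] t by simp
  have "((\<lambda>y. Re (complex_of_real (v y))) \<longlongrightarrow> Re (U (of_real x0))) (at x0)"
    by (rule tendsto_Re[OF t2])
  then have t3: "(v \<longlongrightarrow> Re (U (of_real x0))) (at x0)" by simp
  have "((\<lambda>y. Im (complex_of_real (v y))) \<longlongrightarrow> Im (U (of_real x0))) (at x0)"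
    by (rule tendsto_Im[OF t2])
  then have "((\<lambda>y. 0) \<longlongrightarrow> Im (U (of_real x0))) (at (x0::real))" by simp
  then have im: "Im (U (of_real x0)) = 0"
    using tendsto_unique[OF _ _ tendsto_const] by (metis trivial_limit_at)
  have "Lim (at x0) v = Re (U (of_real x0))"
    by (rule tendsto_Lim[OF _ t3]) simp
  then show ?thesis using im by (simp add: complex_eq_iff)
qed


lemma carrier_Can: "f \<in> carrier Can \<longleftrightarrow> (\<forall>x. f (x + 2*pi) = f x) \<and> (\<forall>x. hol_at f x)"
  by (simp add: Can_def hol_iff)

lemma Fs_hol: "(\<lambda>w. sin ((w - complex_of_real q) / 2)) holomorphic_on A"
  by (auto intro!: holomorphic_intros)

lemma Fs_real: "sin ((complex_of_real y - complex_of_real q) / 2) = complex_of_real (sin ((y - q) / 2))"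
  by (simp flip: sin_of_real)

lemma Fc_real: "cos ((complex_of_real y - complex_of_real q) / 2) = complex_of_real (cos ((y - q) / 2))"
  by (simp flip: cos_of_real)

lemma div_sin:
  assumes gm: "g \<in> mideal q"
  shows "\<exists>u. (\<forall>x. hol_at u x) \<and> (\<forall>x. g x = sin ((x - q)/2) * u x)"
proof -
  have gC: "g \<in> carrier Can" and gq: "g q = 0" using gm by (auto simp: mideal_def)
  then have gper: "\<forall>x. g (x + 2*pi) = g x" and ghol: "\<And>x. hol_at g x"
    by (auto simp: carrier_Can)
  define Fs where "Fs w = sin ((w - complex_of_real q) / 2)" for w
  have Fsh: "Fs holomorphic_on A" for A unfolding Fs_def by (rule Fs_hol)
  have Fsr: "Fs (of_real y) = of_real (sin ((y - q) / 2))" for y unfolding Fs_def by (rule Fs_real)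
  define v where "v t = g t / sin ((t - q)/2)" for t
  define u where "u y = (if sin ((y - q)/2) \<noteq> 0 then v y else Lim (at y) v)" for y
  have g0: "g x = 0" if sx: "sin ((x - q)/2) = 0" for x
  proof -
    obtain k :: int where "x = q + 2*pi * of_int k" using sin_half_zero[OF sx] by blast
    then show ?thesis using per_int[OF gper, of q k] gq by simp
  qed
  have eq: "g x = sin ((x - q)/2) * u x" for x
    by (cases "sin ((x - q)/2) = 0") (auto simp: g0 u_def v_def)
  have "hol_at u x0" for x0
  proof -
    obtain Fg rg where rg: "rg > 0" and hg: "Fg holomorphic_on ball (complex_of_real x0) rg"
      and eg: "\<And>y. \<bar>y - x0\<bar> < rg \<Longrightarrow> Fg (of_real y) = of_real (g y)"
      using ghol[of x0] unfolding hol_at_def by blast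
    show ?thesis
    proof (cases "sin ((x0 - q)/2) = 0")
      case False
      have "isCont Fs (of_real x0)" using holomorphic_on_imp_continuous_on[OF Fsh[of UNIV]]
        by (simp add: continuous_on_eq_continuous_at)
      moreover have "Fs (of_real x0) \<noteq> 0" using False Fsr by simp
      ultimately obtain e where e: "e > 0" and ne: "\<And>w. dist (of_real x0) w < e \<Longrightarrow> Fs w \<noteq> 0"
        using continuous_at_avoid by blast
      define r where "r = min rg e"
      have r: "r > 0" using rg e by (simp add: r_def)
      have "(\<lambda>w. Fg w / Fs w) holomorphic_on ball (of_real x0) r"
        by (rule holomorphic_on_divide) (auto intro: holomorphic_on_subset[OF hg] Fsh simp: r_def dest: ne)
      moreover have "\<forall>y. \<bar>y - x0\<bar> < r \<longrightarrow> Fg (of_real y) / Fs (of_real y) = of_real (u y)"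
      proof (intro allI impI)
        fix y assume y: "\<bar>y - x0\<bar> < r"
        then have "of_real y \<in> ball (complex_of_real x0) e" using of_real_in_ball[of y x0 e] by (simp add: r_def)
        then have "Fs (of_real y) \<noteq> 0" using ne by simp
        then have sy: "sin ((y - q)/2) \<noteq> 0" using Fsr by simp
        have "Fg (of_real y) / Fs (of_real y) = of_real (g y) / of_real (sin ((y - q)/2))"
          using eg[of y] y Fsr by (simp add: r_def)
        also have "\<dots> = of_real (u y)" using sy by (simp add: u_def v_def)
        finally show "Fg (of_real y) / Fs (of_real y) = of_real (u y)" .
      qed
      ultimately show ?thesis unfolding hol_at_def using r
        by (intro exI[of _ "\<lambda>w. Fg w / Fs w"] exI[of _ r]) simp
    next
      case True
      define z where "z = complex_of_real x0"
      have Fgz: "Fg z = 0" using eg[of x0] rg g0[OF True] by (simp add: z_def)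
      have Fsz: "Fs z = 0" using Fsr[of x0] True by (simp add: z_def)
      define G where "G w = (if w = z then deriv Fg z else (Fg w - Fg z) / (w - z))" for w
      define S where "S w = (if w = z then deriv Fs z else (Fs w - Fs z) / (w - z))" for w
      have Gh: "G holomorphic_on ball z rg" unfolding G_def z_def
        by (rule pole_lemma[OF hg]) (use rg in simp)
      have Sh: "S holomorphic_on UNIV" unfolding S_def
        by (rule pole_lemma[OF Fsh]) simp
      have "(Fs has_field_derivative cos ((z - complex_of_real q) / 2) * (1/2)) (at z)"
        unfolding Fs_def by (auto intro!: derivative_eq_intros)
      then have dFs: "deriv Fs z = cos ((z - complex_of_real q) / 2) / 2"
        using DERIV_imp_deriv by fastforce
      have "cos ((x0 - q)/2) \<noteq> 0" using True sin_cos_squared_add[of "(x0 - q)/2"] by auto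
      then have "cos ((z - complex_of_real q) / 2) \<noteq> 0" unfolding z_def
        using Fc_real[of x0 q] by simp
      then have "deriv Fs z \<noteq> 0" using dFs by auto
      then have Sz: "S z \<noteq> 0" by (simp add: S_def)
      have "isCont S z" using holomorphic_on_imp_continuous_on[OF Sh]
        by (simp add: continuous_on_eq_continuous_at)
      then obtain e where e: "e > 0" and ne: "\<And>w. dist z w < e \<Longrightarrow> S w \<noteq> 0"
        using continuous_at_avoid Sz by blast
      define r where "r = min rg e"
      have r: "r > 0" using rg e by (simp add: r_def)
      have Uh: "(\<lambda>w. G w / S w) holomorphic_on ball z r"
        by (rule holomorphic_on_divide) (auto intro: holomorphic_on_subset[OF Gh] holomorphic_on_subset[OF Sh] simp: r_def dest: ne)
      have Ueq: "G (of_real y) / S (of_real y) = of_real (v y)" "sin ((y - q)/2) \<noteq> 0"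
        if y: "y \<noteq> x0" "\<bar>y - x0\<bar> < r" for y
      proof -
        have yz: "complex_of_real y \<noteq> z" using y by (simp add: z_def)
        have "of_real y \<in> ball z e" using of_real_in_ball[of y x0 e] y by (simp add: r_def z_def)
        then have "S (of_real y) \<noteq> 0" using ne by simp
        then have Fsy: "Fs (of_real y) \<noteq> 0" using yz by (simp add: S_def Fsz)
        then show sy: "sin ((y - q)/2) \<noteq> 0" using Fsr by simp
        have "G (of_real y) / S (of_real y) = Fg (of_real y) / Fs (of_real y)"
          using yz Fsy by (simp add: G_def S_def Fgz Fsz)
        also have "\<dots> = of_real (g y) / of_real (sin ((y - q)/2))"
          using eg[of y] y Fsr by (simp add: r_def)
        also have "\<dots> = of_real (v y)" by (simp add: v_def)
        finally show "G (of_real y) / S (of_real y) = of_real (v y)" .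
      qed
      have Uz: "G z / S z = of_real (Lim (at x0) v)"
        using removable_value[OF Uh[unfolded z_def] r, of v] Ueq(1) by (simp add: z_def)
      have "\<forall>y. \<bar>y - x0\<bar> < r \<longrightarrow> G (of_real y) / S (of_real y) = of_real (u y)"
      proof (intro allI impI)
        fix y assume y: "\<bar>y - x0\<bar> < r"
        show "G (of_real y) / S (of_real y) = of_real (u y)"
        proof (cases "y = x0")
          case True then show ?thesis using Uz \<open>sin ((x0 - q)/2) = 0\<close> by (simp add: u_def z_def)
        next
          case False then show ?thesis using Ueq[OF False y] by (simp add: u_def)
        qed
      qed
      then show ?thesis unfolding hol_at_def using r Uh
        by (intro exI[of _ "\<lambda>w. G w / S w"] exI[of _ r]) (simp add: z_def)
    qed
  qed
  then show ?thesis using eq by blast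
qed


lemma Can_ops:
  "mult Can = (\<lambda>f g x. f x * g x)" "add Can = (\<lambda>f g x. f x + g x)"
  "one Can = (\<lambda>x. 1)" "zero Can = (\<lambda>x. 0)"
  by (simp_all add: Can_def)

lemma Can_cring: "cring Can"
proof (rule cringI)
  show "abelian_group Can"
  proof (rule abelian_groupI)
    fix x assume x: "x \<in> carrier Can"
    show "\<exists>y\<in>carrier Can. y \<oplus>\<^bsub>Can\<^esub> x = \<zero>\<^bsub>Can\<^esub>"
    proof (rule bexI[of _ "\<lambda>y. - x y"])
      show "(\<lambda>y. - x y) \<in> carrier Can" using x by (auto simp: carrier_Can intro: hol_minus)
    qed (simp add: Can_ops)
  qed (auto simp: carrier_Can Can_ops fun_eq_iff algebra_simps intro: hol_add hol_const)
  show "comm_monoid Can"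
    by (rule comm_monoidI) (auto simp: carrier_Can Can_ops fun_eq_iff algebra_simps intro: hol_mult hol_const)
qed (auto simp: Can_ops fun_eq_iff algebra_simps)

interpretation C: cring Can by (rule Can_cring)

lemma (in cring) ideal_crit:
  assumes "I \<subseteq> carrier R" "\<zero> \<in> I" "\<And>a b. a \<in> I \<Longrightarrow> b \<in> I \<Longrightarrow> a \<oplus> b \<in> I"
    "\<And>a x. a \<in> I \<Longrightarrow> x \<in> carrier R \<Longrightarrow> x \<otimes> a \<in> I"
  shows "ideal I R"
proof (rule idealI[OF ring_axioms])
  show "subgroup I (add_monoid R)"
  proof (rule add.subgroupI)
    fix a assume a: "a \<in> I"
    then have ac: "a \<in> carrier R" using assms(1) by blast
    have "\<ominus> a = (\<ominus> \<one>) \<otimes> a" using ac by (simp add: l_minus)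
    then show "\<ominus> a \<in> I" using assms(4)[OF a] by simp
  qed (use assms in auto)
next
  fix a x assume "a \<in> I" "x \<in> carrier R"
  then show "x \<otimes> a \<in> I" by (rule assms(4))
  then show "a \<otimes> x \<in> I" using \<open>a \<in> I\<close> \<open>x \<in> carrier R\<close> assms(1) m_comm by auto
qed

lemma mideal_ideal: "ideal (mideal q) Can"
  by (rule C.ideal_crit) (auto simp: mideal_def Can_ops carrier_Can intro: hol_add hol_mult hol_const)

lemma sin_shift: "sin ((x + 2*pi - q)/2) = - sin ((x - q)/2)"
proof -
  have e: "(x + 2*pi - q)/2 = (x - q)/2 + pi" by (simp add: field_simps)
  show ?thesis unfolding e by (rule sin_periodic_pi)
qed

lemma cos_shift: "cos ((x + 2*pi - q)/2) = - cos ((x - q)/2)"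
proof -
  have e: "(x + 2*pi - q)/2 = (x - q)/2 + pi" by (simp add: field_simps)
  show ?thesis unfolding e by (rule cos_periodic_pi)
qed

lemma A_in: "(\<lambda>x. sin ((x - q)/2) * cos ((x - q)/2)) \<in> mideal q"
  by (auto simp: mideal_def carrier_Can sin_shift cos_shift intro: hol_mult hol_sin hol_cos)

lemma B_in: "(\<lambda>x. sin ((x - q)/2) * sin ((x - q)/2)) \<in> mideal q"
  by (auto simp: mideal_def carrier_Can sin_shift intro: hol_mult hol_sin)

lemma const_in: "(\<lambda>x. c) \<in> carrier Can"
  by (auto simp: carrier_Can intro: hol_const)

lemma trig_id:
  fixes sa ca sb cb :: real
  assumes "sa^2 + ca^2 = 1" "sb^2 + cb^2 = 1"
  shows "(cb * ca + sb * sa) * ((sa * ca) * (sb * cb) + (sa * sa) * (sb * sb))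
       + (sb * ca - cb * sa) * ((sa * ca) * (sb * sb) + (-1) * ((sa * sa) * (sb * cb))) = sa * sb"
proof -
  have "(cb * ca + sb * sa) * ((sa * ca) * (sb * cb) + (sa * sa) * (sb * sb))
       + (sb * ca - cb * sa) * ((sa * ca) * (sb * sb) + (-1) * ((sa * sa) * (sb * cb)))
       = sa * sb * ((sa^2 + ca^2) * (sb^2 + cb^2))"
    by (simp add: power2_eq_square algebra_simps)
  then show ?thesis using assms by simp
qed

lemma pair_in:
  "(\<lambda>x. sin ((x - l)/2) * sin ((x - q)/2)) \<in> ideal_prod Can (mideal l) (mideal q)"
proof -
  let ?P = "ideal_prod Can (mideal l) (mideal q)"
  have PI: "ideal ?P Can" by (intro C.ideal_prod_is_ideal mideal_ideal)
  let ?Al = "\<lambda>x. sin ((x - l)/2) * cos ((x - l)/2)"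
  let ?Bl = "\<lambda>x. sin ((x - l)/2) * sin ((x - l)/2)"
  let ?Aq = "\<lambda>x. sin ((x - q)/2) * cos ((x - q)/2)"
  let ?Bq = "\<lambda>x. sin ((x - q)/2) * sin ((x - q)/2)"
  have t1: "?Al \<otimes>\<^bsub>Can\<^esub> ?Aq \<in> ?P" by (rule ideal_prod.prod[OF A_in A_in])
  have t2: "?Bl \<otimes>\<^bsub>Can\<^esub> ?Bq \<in> ?P" by (rule ideal_prod.prod[OF B_in B_in])
  have t3: "?Al \<otimes>\<^bsub>Can\<^esub> ?Bq \<in> ?P" by (rule ideal_prod.prod[OF A_in B_in])
  have t4: "?Bl \<otimes>\<^bsub>Can\<^esub> ?Aq \<in> ?P" by (rule ideal_prod.prod[OF B_in A_in])
  let ?k1 = "\<lambda>x::real. cos ((l - q)/2)"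
  let ?k2 = "\<lambda>x::real. sin ((l - q)/2)"
  let ?m1 = "\<lambda>x::real. -1::real"
  have E: "?k1 \<otimes>\<^bsub>Can\<^esub> (?Al \<otimes>\<^bsub>Can\<^esub> ?Aq \<oplus>\<^bsub>Can\<^esub> ?Bl \<otimes>\<^bsub>Can\<^esub> ?Bq)
     \<oplus>\<^bsub>Can\<^esub> ?k2 \<otimes>\<^bsub>Can\<^esub> (?Al \<otimes>\<^bsub>Can\<^esub> ?Bq \<oplus>\<^bsub>Can\<^esub> ?m1 \<otimes>\<^bsub>Can\<^esub> (?Bl \<otimes>\<^bsub>Can\<^esub> ?Aq)) \<in> ?P"
  proof -
    note ac = additive_subgroup.a_closed[OF ideal.axioms(1)[OF PI]]
    note lc = ideal.I_l_closed[OF PI]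
    show ?thesis by (intro ac lc[OF ac[OF t1 t2] const_in] lc[OF ac[OF t3 lc[OF t4 const_in]] const_in])
  qed
  have "?k1 \<otimes>\<^bsub>Can\<^esub> (?Al \<otimes>\<^bsub>Can\<^esub> ?Aq \<oplus>\<^bsub>Can\<^esub> ?Bl \<otimes>\<^bsub>Can\<^esub> ?Bq)
     \<oplus>\<^bsub>Can\<^esub> ?k2 \<otimes>\<^bsub>Can\<^esub> (?Al \<otimes>\<^bsub>Can\<^esub> ?Bq \<oplus>\<^bsub>Can\<^esub> ?m1 \<otimes>\<^bsub>Can\<^esub> (?Bl \<otimes>\<^bsub>Can\<^esub> ?Aq))
     = (\<lambda>x. sin ((x - l)/2) * sin ((x - q)/2))"
  proof (rule ext)
    fix x
    have d: "(l - q)/2 = (x - q)/2 - (x - l)/2" by (simp add: field_simps)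
    show "(?k1 \<otimes>\<^bsub>Can\<^esub> (?Al \<otimes>\<^bsub>Can\<^esub> ?Aq \<oplus>\<^bsub>Can\<^esub> ?Bl \<otimes>\<^bsub>Can\<^esub> ?Bq)
     \<oplus>\<^bsub>Can\<^esub> ?k2 \<otimes>\<^bsub>Can\<^esub> (?Al \<otimes>\<^bsub>Can\<^esub> ?Bq \<oplus>\<^bsub>Can\<^esub> ?m1 \<otimes>\<^bsub>Can\<^esub> (?Bl \<otimes>\<^bsub>Can\<^esub> ?Aq))) x
     = sin ((x - l)/2) * sin ((x - q)/2)"
      unfolding Can_ops d cos_diff sin_diff
      using trig_id[of "sin ((x - l)/2)" "cos ((x - l)/2)" "sin ((x - q)/2)" "cos ((x - q)/2)"]
      by (simp add: sin_cos_squared_add)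
  qed
  with E show ?thesis by simp
qed


lemma ideal_power_0: "ideal_power I 0 = carrier Can"
  by (simp add: ideal_power_def ideals_set_def)

lemma ideal_power_Suc: "ideal_power I (Suc k) = ideal_prod Can (ideal_power I k) I"
  by (simp add: ideal_power_def ideals_set_def)

lemma ideal_power_ideal: "ideal I Can \<Longrightarrow> ideal (ideal_power I k) Can"
  by (induction k) (simp_all add: ideal_power_0 ideal_power_Suc C.oneideal C.ideal_prod_is_ideal)

lemma prod_mideals_ideal: "ideal (prod_mideals p a n) Can"
  by (induction n) (simp_all add: C.oneideal C.ideal_prod_is_ideal ideal_power_ideal mideal_ideal)

definition Gp :: "(real \<Rightarrow> real) set \<Rightarrow> (real \<Rightarrow> real) \<Rightarrow> nat \<Rightarrow> bool" where
  "Gp I h k \<longleftrightarrow> (even k \<longrightarrow> h \<in> I) \<and>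
     (odd k \<longrightarrow> (\<forall>q. (\<lambda>x. h x * sin ((x - q)/2)) \<in> ideal_prod Can I (mideal q)))"

lemma Gp_step:
  assumes I: "ideal I Can" and G: "Gp I h k"
  shows "Gp (ideal_prod Can I (mideal l)) (\<lambda>x. h x * sin ((x - l)/2)) (Suc k)"
  unfolding Gp_def
proof (intro conjI impI allI)
  assume "even (Suc k)"
  then have "odd k" by simp
  then show "(\<lambda>x. h x * sin ((x - l)/2)) \<in> ideal_prod Can I (mideal l)" using G by (simp add: Gp_def)
next
  fix q assume "odd (Suc k)"
  then have "even k" by simp
  then have hI: "h \<in> I" using G by (simp add: Gp_def)
  have "h \<otimes>\<^bsub>Can\<^esub> (\<lambda>x. sin ((x - l)/2) * sin ((x - q)/2))
        \<in> ideal_prod Can I (ideal_prod Can (mideal l) (mideal q))"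
    by (rule ideal_prod.prod[OF hI pair_in])
  also have "ideal_prod Can I (ideal_prod Can (mideal l) (mideal q))
     = ideal_prod Can (ideal_prod Can I (mideal l)) (mideal q)"
    by (rule C.ideal_prod_assoc[symmetric]) (simp_all add: I mideal_ideal)
  finally show "(\<lambda>x. h x * sin ((x - l) / 2) * sin ((x - q) / 2))
        \<in> ideal_prod Can (ideal_prod Can I (mideal l)) (mideal q)"
    by (simp add: Can_ops mult.assoc)
qed

lemma Gp_power:
  assumes I: "ideal I Can" and G: "Gp I h k"
  shows "Gp (ideal_prod Can I (ideal_power (mideal l) b)) (\<lambda>x. h x * sin ((x - l)/2) ^ b) (k + b)"
proof (induction b)
  case 0
  then show ?case using G by (simp add: ideal_power_0 C.ideal_prod_one I)
next
  case (Suc b)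
  have eq: "ideal_prod Can I (ideal_power (mideal l) (Suc b))
     = ideal_prod Can (ideal_prod Can I (ideal_power (mideal l) b)) (mideal l)"
    unfolding ideal_power_Suc
    by (rule C.ideal_prod_assoc[symmetric]) (simp_all add: I mideal_ideal ideal_power_ideal)
  have "Gp (ideal_prod Can (ideal_prod Can I (ideal_power (mideal l) b)) (mideal l))
       (\<lambda>x. h x * sin ((x - l)/2) ^ b * sin ((x - l)/2)) (Suc (k + b))"
    by (rule Gp_step[OF _ Suc]) (simp add: C.ideal_prod_is_ideal I mideal_ideal ideal_power_ideal)
  moreover have "(\<lambda>x. h x * sin ((x - l)/2) ^ b * sin ((x - l)/2)) = (\<lambda>x. h x * sin ((x - l)/2) ^ Suc b)"
    by (simp add: fun_eq_iff mult_ac)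
  ultimately show ?case unfolding eq by simp
qed

definition hprod :: "(nat \<Rightarrow> real) \<Rightarrow> (nat \<Rightarrow> nat) \<Rightarrow> nat \<Rightarrow> real \<Rightarrow> real" where
  "hprod p a n = (\<lambda>x. \<Prod>i<n. sin ((x - p i)/2) ^ a i)"

lemma Gp_main: "Gp (prod_mideals p a n) (hprod p a n) (\<Sum>i<n. a i)"
proof (induction n)
  case 0
  have "(\<lambda>x. 1::real) \<in> carrier Can" by (rule const_in)
  then show ?case by (simp add: Gp_def hprod_def)
next
  case (Suc n)
  have "Gp (ideal_prod Can (prod_mideals p a n) (ideal_power (mideal (p n)) (a n)))
      (\<lambda>x. hprod p a n x * sin ((x - p n)/2) ^ a n) ((\<Sum>i<n. a i) + a n)"
    by (rule Gp_power[OF prod_mideals_ideal Suc])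
  then show ?case by (simp add: hprod_def)
qed

definition Dv :: "(real \<Rightarrow> real) \<Rightarrow> (real \<Rightarrow> real) set" where
  "Dv h = {g. \<exists>u. (\<forall>x. hol_at u x) \<and> (\<forall>x. g x = h x * u x)}"

lemma Dv_prod:
  assumes "I \<subseteq> Dv h1" "J \<subseteq> Dv h2"
  shows "ideal_prod Can I J \<subseteq> Dv (\<lambda>x. h1 x * h2 x)"
proof
  fix s assume "s \<in> ideal_prod Can I J"
  then show "s \<in> Dv (\<lambda>x. h1 x * h2 x)"
  proof (induction s rule: ideal_prod.induct)
    case (prod i j)
    obtain u1 where u1: "\<forall>x. hol_at u1 x" "\<forall>x. i x = h1 x * u1 x" using prod(1) assms(1) by (auto simp: Dv_def)
    obtain u2 where u2: "\<forall>x. hol_at u2 x" "\<forall>x. j x = h2 x * u2 x" using prod(2) assms(2) by (auto simp: Dv_def)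
    show ?case unfolding Dv_def Can_ops
      by (rule CollectI, rule exI[of _ "\<lambda>x. u1 x * u2 x"]) (use u1 u2 in \<open>auto intro: hol_mult simp: algebra_simps\<close>)
  next
    case (sum s1 s2)
    obtain u1 where u1: "\<forall>x. hol_at u1 x" "\<forall>x. s1 x = h1 x * h2 x * u1 x" using sum.IH(1) by (auto simp: Dv_def)
    obtain u2 where u2: "\<forall>x. hol_at u2 x" "\<forall>x. s2 x = h1 x * h2 x * u2 x" using sum.IH(2) by (auto simp: Dv_def)
    show ?case unfolding Dv_def Can_ops
      by (rule CollectI, rule exI[of _ "\<lambda>x. u1 x + u2 x"]) (use u1 u2 in \<open>auto intro: hol_add simp: algebra_simps\<close>)
  qed
qed

lemma Dv_power: "ideal_power (mideal q) b \<subseteq> Dv (\<lambda>x. sin ((x - q)/2) ^ b)"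
proof (induction b)
  case 0
  show ?case unfolding ideal_power_0
  proof
    fix g assume "g \<in> carrier Can"
    then have "\<forall>x. hol_at g x" by (simp add: carrier_Can)
    then show "g \<in> Dv (\<lambda>x. sin ((x - q)/2) ^ 0)" unfolding Dv_def by auto
  qed
next
  case (Suc b)
  have m: "mideal q \<subseteq> Dv (\<lambda>x. sin ((x - q)/2))"
    using div_sin by (auto simp: Dv_def)
  show ?case unfolding ideal_power_Suc using Dv_prod[OF Suc m] by (simp add: mult.commute)
qed

lemma Dv_main: "prod_mideals p a n \<subseteq> Dv (hprod p a n)"
proof (induction n)
  case 0
  show ?case
  proof
    fix g assume "g \<in> prod_mideals p a 0"
    then have "\<forall>x. hol_at g x" by (simp add: carrier_Can)
    then show "g \<in> Dv (hprod p a 0)" unfolding Dv_def hprod_def by auto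
  qed
next
  case (Suc n)
  show ?case using Dv_prod[OF Suc Dv_power] by (simp add: hprod_def)
qed

lemma hprod_zeros: "{x. hprod p a n x = 0} \<subseteq> (\<Union>i<n. range (\<lambda>k::int. p i + 2*pi * of_int k))"
proof
  fix x assume "x \<in> {x. hprod p a n x = 0}"
  then obtain i where i: "i < n" "sin ((x - p i)/2) ^ a i = 0" by (auto simp: hprod_def)
  then have "sin ((x - p i)/2) = 0" by simp
  then obtain k :: int where "x = p i + 2*pi * of_int k" using sin_half_zero by blast
  then show "x \<in> (\<Union>i<n. range (\<lambda>k::int. p i + 2*pi * of_int k))" using i by auto
qed

lemma per_u:
  assumes hper: "\<forall>x. h (x + 2*pi) = h (x::real)" and gper: "\<forall>x. g (x + 2*pi) = g x"
    and u: "\<forall>x. hol_at u x" and eq: "\<forall>x. g x = h x * u x"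
    and Z: "countable {x. h x = 0}"
  shows "u (x + 2*pi) = u x"
proof (rule ccontr)
  define w where "w y = u (y + 2*pi) - u y" for y
  assume "u (x + 2*pi) \<noteq> u x"
  then have wx: "w x \<noteq> 0" by (simp add: w_def)
  have c1: "isCont u (x + 2*pi)" using hol_isCont u by blast
  have "isCont (\<lambda>y. y + 2*pi) x" by (intro continuous_intros)
  then have "isCont (\<lambda>y. u (y + 2*pi)) x" using c1 isCont_o2 by blast
  then have "isCont w x" unfolding w_def using hol_isCont u by (intro continuous_intros) auto
  then obtain e where e: "e > 0" and ne: "\<And>y. dist x y < e \<Longrightarrow> w y \<noteq> 0"
    using continuous_at_avoid wx by blast
  have "ball x e \<subseteq> {x. h x = 0}"
  proof
    fix y assume "y \<in> ball x e"
    then have wy: "w y \<noteq> 0" using ne by simp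
    have "h y * u (y + 2*pi) = h (y + 2*pi) * u (y + 2*pi)" using hper by simp
    also have "\<dots> = g (y + 2*pi)" using eq by simp
    also have "\<dots> = g y" using gper by simp
    also have "\<dots> = h y * u y" using eq by simp
    finally have "h y * w y = 0" by (simp add: w_def algebra_simps)
    then show "y \<in> {x. h x = 0}" using wy by simp
  qed
  then have "countable (ball x e)" using Z countable_subset by blast
  then show False using uncountable_ball[of e x] e by simp
qed

theorem corollary1:
  fixes p :: "nat \<Rightarrow> real" and a :: "nat \<Rightarrow> nat" and n :: nat
  assumes "even (\<Sum>i<n. a i)"
  shows "principalideal (prod_mideals p a n) Can"
proof -
  let ?P = "prod_mideals p a n"
  let ?h = "hprod p a n"
  have PI: "ideal ?P Can" by (rule prod_mideals_ideal)
  have hP: "?h \<in> ?P" using Gp_main[of p a n] assms by (simp add: Gp_def)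
  have hC: "?h \<in> carrier Can" using hP ideal.Icarr[OF PI] by blast
  then have hper: "\<forall>x. ?h (x + 2*pi) = ?h x" by (simp add: carrier_Can)
  have Z: "countable {x. ?h x = 0}"
    by (rule countable_subset[OF hprod_zeros]) auto
  have "?P = PIdl\<^bsub>Can\<^esub> ?h"
  proof
    show "PIdl\<^bsub>Can\<^esub> ?h \<subseteq> ?P" by (rule C.cgenideal_minimal[OF PI hP])
    show "?P \<subseteq> PIdl\<^bsub>Can\<^esub> ?h"
    proof
      fix g assume gP: "g \<in> ?P"
      then have gC: "g \<in> carrier Can" using ideal.Icarr[OF PI] by blast
      then have gper: "\<forall>x. g (x + 2*pi) = g x" by (simp add: carrier_Can)
      obtain u where u: "\<forall>x. hol_at u x" and eq: "\<forall>x. g x = ?h x * u x"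
        using gP Dv_main[of p a n] by (auto simp: Dv_def)
      have "\<forall>x. u (x + 2*pi) = u x" using per_u[OF hper gper u eq Z] by blast
      then have uC: "u \<in> carrier Can" using u by (simp add: carrier_Can)
      have "g = u \<otimes>\<^bsub>Can\<^esub> ?h" using eq by (simp add: Can_ops fun_eq_iff mult.commute)
      then show "g \<in> PIdl\<^bsub>Can\<^esub> ?h" using uC unfolding cgenideal_def by blast
    qed
  qed
  then show ?thesis using C.cgenideal_is_principalideal[OF hC] by simp
qed

end
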